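(* Let $p$ be prime and $(x_i,y_i)_{0\le i\le p-1}\in(\mathbb{Z}_p\times\mathbb{Z}_p)^p$ with $x_i\neq x_j$ for all $i\ne j$, and suppose the $y_i$ are not all equal. Then there exists $c\in\mathbb{Z}_p^*$ (i.e. $c\not\equiv0$) which is not compatible with $(x_i,y_i)_{0\le i\le p-1}$.
   Context: A value $c\in\mathbb{Z}_p$ is compatible with $p$ pairs $(x_i,y_i)_{0\le i\le p-1}$ in $\mathbb{Z}_p\times\mathbb{Z}_p$ if $x_i+cy_i\not\equiv x_j+cy_j\pmod p$ for all $i\neq j$, i.e. $\{x_i+cy_i\}_{0\le i\le p-1}=\mathbb{Z}_p$. *)

theory Defs
  imports "HOL-Number_Theory.Cong"
begin

text \<open>Elements of Z_p are represented by integers in {0..<p}; congruence mod p is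
  used for equality in Z_p.\<close>

definition compatible :: "nat \<Rightarrow> int \<Rightarrow> (nat \<Rightarrow> int) \<Rightarrow> (nat \<Rightarrow> int) \<Rightarrow> bool" where
  "compatible p c x y \<longleftrightarrow>
     (\<forall>i<p. \<forall>j<p. i \<noteq> j \<longrightarrow> \<not> [x i + c * y i = x j + c * y j] (mod int p))"

end

theory Submission
  imports Defs "HOL-Computational_Algebra.Primes"
begin

theorem lemma4p1:
  fixes p :: nat and x y :: "nat \<Rightarrow> int"
  assumes "prime p"
    and "\<forall>i<p. x i \<in> {0..<int p} \<and> y i \<in> {0..<int p}"
    and "\<forall>i<p. \<forall>j<p. i \<noteq> j \<longrightarrow> x i \<noteq> x j"
    and "\<exists>i<p. \<exists>j<p. y i \<noteq> y j"
  shows "\<exists>c \<in> {1..<int p}. \<not> compatible p c x y"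
proof -
  obtain i j where ij: "i < p" "j < p" "y i \<noteq> y j" using assms(4) by blast
  have neq: "i \<noteq> j" using ij by auto
  have pp: "prime (int p)" using assms(1) by simp
  have p0: "int p > 1" using assms(1) prime_gt_1_nat by fastforce
  define d where "d = y i - y j"
  define e where "e = x i - x j"
  have yb: "0 \<le> y i" "y i < int p" "0 \<le> y j" "y j < int p" "0 \<le> x i" "x i < int p" "0 \<le> x j" "x j < int p"
    using assms(2) ij by auto
  have dr: "\<bar>d\<bar> < int p" "d \<noteq> 0" using yb ij unfolding d_def by auto
  have er: "\<bar>e\<bar> < int p" "e \<noteq> 0" using yb assms(3) ij neq unfolding e_def by auto
  have ndvd: "\<not> int p dvd d"
  proof
    assume "int p dvd d"
    then have "int p \<le> \<bar>d\<bar>" using dr(2) by (metis dvd_imp_le_int of_nat_0_le_iff abs_of_nonneg)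
    then show False using dr by simp
  qed
  have ndvde: "\<not> int p dvd e"
  proof
    assume "int p dvd e"
    then have "int p \<le> \<bar>e\<bar>" using er(2) by (metis dvd_imp_le_int of_nat_0_le_iff abs_of_nonneg)
    then show False using er by simp
  qed
  have "coprime d (int p)" using pp ndvd
    using coprime_commute prime_imp_coprime by blast
  then obtain u where u: "[d * u = 1] (mod int p)" using cong_solve_coprime_int by blast
  have nu: "\<not> int p dvd u"
  proof
    assume "int p dvd u"
    then have "int p dvd d * u" by simp
    then have "[d * u = 0] (mod int p)" by (simp add: cong_0_iff)
    then have "[1 = 0] (mod int p)" using u by (meson cong_sym cong_trans)
    then show False using p0 by (simp add: cong_0_iff)
  qed
  define c where "c = (- e * u) mod int p"
  have c0: "c \<ge> 0" "c < int p" using p0 unfolding c_def by auto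
  have cne: "c \<noteq> 0"
  proof
    assume "c = 0"
    then have "int p dvd (- e * u)" unfolding c_def by (simp add: mod_eq_0_iff_dvd)
    then have "int p dvd e * u" by simp
    then have "int p dvd e \<or> int p dvd u" using pp prime_dvd_mult_iff by blast
    then show False using ndvde nu by blast
  qed
  have cc: "[c = - e * u] (mod int p)" unfolding c_def by (simp add: cong_def)
  have "[x i + c * y i = x j + c * y j] (mod int p)"
  proof -
    have "[e + c * d = e + (- e * u) * d] (mod int p)"
      by (intro cong_add cong_refl cong_mult cc)
    moreover have "[e + (- e * u) * d = e - e * 1] (mod int p)"
    proof -
      have "[e * (d * u) = e * 1] (mod int p)" by (intro cong_mult cong_refl u)
      then have "[e - e * (d * u) = e - e * 1] (mod int p)" by (intro cong_diff cong_refl)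
      then show ?thesis by (simp add: algebra_simps)
    qed
    ultimately have "[e + c * d = 0] (mod int p)" by (metis cong_trans diff_self mult_1_right)
    then have "int p dvd e + c * d" by (simp add: cong_0_iff)
    then have "int p dvd (x i + c * y i) - (x j + c * y j)"
      unfolding e_def d_def by (simp add: algebra_simps)
    then show ?thesis by (simp add: cong_iff_dvd_diff)
  qed
  then have "\<not> compatible p c x y" using ij neq unfolding compatible_def by blast
  moreover have "c \<in> {1..<int p}" using c0 cne by auto
  ultimately show ?thesis by blast
qed

end
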